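(* Let $r\ge 2$, let $P_1,\dots,P_r$ be nonempty point sets in $\mathbb{R}^d$, let $D=\max_{i\in[r]}\operatorname{diam}P_i$, and let $t\in[r-1]$. Let $a\in\mathbb{R}^d$ and assume that for all distinct $i_1,\dots,i_t\in[r]$ we have $a\in\operatorname{conv}(P_{i_1}\cup\dots\cup P_{i_t})$. Then there exists a transversal $T=\{p_1,\dots,p_r\}$ (with $p_i\in P_i$ for all $i$) such that \[ d(a,\operatorname{conv}T)\le \beta\cdot\frac{D}{\sqrt{r-t+1}},\qquad \beta=4\sqrt{\frac{\ln 4}{3}}. \]
   Context: $d(a,S)$ denotes Euclidean distance from a point to a set; $\operatorname{diam}$ is Euclidean diameter; $[m]=\{1,\dots,m\}$. *)

theory Defs
  imports "HOL-Analysis.Analysis"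
begin

end

theory Submission imports Defs begin

lemma exists_good_point:
  fixes P :: "'a::euclidean_space set"
  assumes "y \<in> convex hull P"
  shows "\<exists>q\<in>P. inner v (q - y) \<le> 0"
proof (rule ccontr)
  assume "\<not> ?thesis"
  hence "P \<subseteq> {x. inner v x > inner v y}" by (auto simp: inner_diff_right)
  hence "convex hull P \<subseteq> {x. inner v x > inner v y}"
    by (intro hull_minimal convex_halfspace_gt)
  thus False using assms by auto
qed

lemma hull_near:
  fixes P :: "'a::euclidean_space set"
  assumes "finite P" "y \<in> convex hull P" "q \<in> P" "diameter P \<le> D"
  shows "norm (q - y) \<le> D"
proof -
  have "P \<subseteq> cball q D"
  proof
    fix x assume "x \<in> P"
    hence "dist q x \<le> diameter P"
      using assms by (intro diameter_bounded_bound) (auto intro: finite_imp_bounded)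
    thus "x \<in> cball q D" using assms by auto
  qed
  hence "convex hull P \<subseteq> cball q D" by (intro hull_minimal convex_cball)
  thus ?thesis using assms(2) by (auto simp: dist_norm)
qed

lemma greedy:
  fixes P :: "nat \<Rightarrow> 'a::euclidean_space set" and y :: "nat \<Rightarrow> 'a" and l :: "nat \<Rightarrow> real"
  assumes "finite I" "\<forall>i\<in>I. finite (P i) \<and> y i \<in> convex hull P i \<and> diameter (P i) \<le> D"
  shows "\<exists>p. (\<forall>i\<in>I. p i \<in> P i) \<and> (norm (\<Sum>i\<in>I. l i *\<^sub>R (p i - y i)))^2 \<le> D^2 * (\<Sum>i\<in>I. (l i)^2)"
  using assms
proof (induction I rule: finite_induct)
  case empty
  then show ?case by auto
next
  case (insert j I)
  then obtain p where p: "\<forall>i\<in>I. p i \<in> P i"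
    and h: "(norm (\<Sum>i\<in>I. l i *\<^sub>R (p i - y i)))^2 \<le> D^2 * (\<Sum>i\<in>I. (l i)^2)" by auto
  define s where "s = (\<Sum>i\<in>I. l i *\<^sub>R (p i - y i))"
  obtain q where q: "q \<in> P j" "inner (l j *\<^sub>R s) (q - y j) \<le> 0"
    using exists_good_point insert.prems by blast
  have nq: "norm (q - y j) \<le> D" using hull_near insert.prems q by auto
  hence D0: "D \<ge> 0" by (meson norm_ge_zero order_trans)
  define p' where "p' = p(j := q)"
  have "(\<Sum>i\<in>insert j I. l i *\<^sub>R (p' i - y i)) = l j *\<^sub>R (q - y j) + s"
    using insert.hyps unfolding p'_def s_def
    by (simp add: sum.insert) (intro sum.cong, auto)
  moreover have "(norm (l j *\<^sub>R (q - y j) + s))^2 \<le> D^2 * (\<Sum>i\<in>insert j I. (l i)^2)"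
  proof -
    have "(norm (l j *\<^sub>R (q - y j) + s))^2 = (norm (l j *\<^sub>R (q - y j)))^2 + 2 * inner (l j *\<^sub>R s) (q - y j) + (norm s)^2"
      by (simp add: power2_norm_eq_inner inner_add_left inner_add_right inner_commute algebra_simps)
    also have "\<dots> \<le> (l j)^2 * D^2 + D^2 * (\<Sum>i\<in>I. (l i)^2)"
    proof -
      have "(norm (l j *\<^sub>R (q - y j)))^2 = (l j)^2 * (norm (q - y j))^2"
        by (simp add: power_mult_distrib)
      also have "\<dots> \<le> (l j)^2 * D^2"
        using nq by (intro mult_left_mono power_mono) auto
      finally show ?thesis using q(2) h unfolding s_def[symmetric] by linarith
    qed
    finally show ?thesis using insert.hyps by (simp add: algebra_simps)
  qed
  ultimately have "(norm (\<Sum>i\<in>insert j I. l i *\<^sub>R (p' i - y i)))^2 \<le> D^2 * (\<Sum>i\<in>insert j I. (l i)^2)"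
    by simp
  moreover have "\<forall>i\<in>insert j I. p' i \<in> P i" using p q insert.hyps unfolding p'_def by auto
  ultimately show ?case by blast
qed

definition capC :: "nat set \<Rightarrow> (nat \<Rightarrow> 'a::euclidean_space set) \<Rightarrow> real \<Rightarrow> 'a set" where
  "capC I P c = {x. \<exists>l y. (\<forall>i\<in>I. 0 \<le> l i \<and> l i \<le> c \<and> y i \<in> convex hull P i) \<and> sum l I = 1 \<and> x = (\<Sum>i\<in>I. l i *\<^sub>R y i)}"

lemma convex_capC:
  assumes "finite I" "\<And>i. i \<in> I \<Longrightarrow> P i \<noteq> {}"
  shows "convex (capC I P c)"
  unfolding convex_def
proof (intro ballI allI impI)
  fix x z :: 'a and u v :: real
  assume x: "x \<in> capC I P c" and z: "z \<in> capC I P c" and uv: "0 \<le> u" "0 \<le> v" "u + v = 1"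
  obtain l y where ly: "\<forall>i\<in>I. 0 \<le> l i \<and> l i \<le> c \<and> y i \<in> convex hull P i" "sum l I = 1" "x = (\<Sum>i\<in>I. l i *\<^sub>R y i)"
    using x unfolding capC_def by blast
  obtain l' y' where ly': "\<forall>i\<in>I. 0 \<le> l' i \<and> l' i \<le> c \<and> y' i \<in> convex hull P i" "sum l' I = 1" "z = (\<Sum>i\<in>I. l' i *\<^sub>R y' i)"
    using z unfolding capC_def by blast
  define L where "L i = u * l i + v * l' i" for i
  define Y where "Y i = (if L i = 0 then y i else (u * l i / L i) *\<^sub>R y i + (v * l' i / L i) *\<^sub>R y' i)" for i
  have key: "L i *\<^sub>R Y i = u *\<^sub>R (l i *\<^sub>R y i) + v *\<^sub>R (l' i *\<^sub>R y' i)" if i: "i \<in> I" for i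
  proof (cases "L i = 0")
    case True
    have "u * l i \<ge> 0" "v * l' i \<ge> 0" using uv ly(1) ly'(1) i by auto
    hence "u * l i = 0" "v * l' i = 0" using True unfolding L_def by linarith+
    then show ?thesis using True unfolding Y_def by (simp only: scaleR_scaleR) simp
  next
    case False
    then show ?thesis unfolding Y_def by (simp add: scaleR_add_right scaleR_scaleR)
  qed
  have Yin: "Y i \<in> convex hull P i" if i: "i \<in> I" for i
  proof (cases "L i = 0")
    case True
    then show ?thesis using ly(1) i unfolding Y_def by auto
  next
    case False
    have nn: "u * l i \<ge> 0" "v * l' i \<ge> 0" using uv ly(1) ly'(1) i by auto
    hence Lp: "L i > 0" using False unfolding L_def by linarith
    have "(u * l i / L i) + (v * l' i / L i) = (u * l i + v * l' i) / L i" by (simp add: add_divide_distrib)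
    hence "(u * l i / L i) + (v * l' i / L i) = 1" using Lp unfolding L_def by simp
    moreover have "u * l i / L i \<ge> 0" "v * l' i / L i \<ge> 0" using nn Lp by auto
    ultimately have "(u * l i / L i) *\<^sub>R y i + (v * l' i / L i) *\<^sub>R y' i \<in> convex hull P i"
      using convexD[OF convex_convex_hull] ly(1) ly'(1) i by blast
    then show ?thesis using False unfolding Y_def by simp
  qed
  have "\<forall>i\<in>I. 0 \<le> L i \<and> L i \<le> c \<and> Y i \<in> convex hull P i"
  proof
    fix i assume i: "i \<in> I"
    have "u * l i \<le> u * c" "v * l' i \<le> v * c" using uv ly(1) ly'(1) i by (auto intro: mult_left_mono)
    hence "L i \<le> (u + v) * c" unfolding L_def by (simp add: distrib_right)
    moreover have "0 \<le> L i" using uv ly(1) ly'(1) i unfolding L_def by auto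
    ultimately show "0 \<le> L i \<and> L i \<le> c \<and> Y i \<in> convex hull P i" using uv Yin i by auto
  qed
  moreover have "sum L I = 1" unfolding L_def using ly(2) ly'(2) uv
    by (simp add: sum.distrib sum_distrib_left[symmetric])
  moreover have "u *\<^sub>R x + v *\<^sub>R z = (\<Sum>i\<in>I. L i *\<^sub>R Y i)"
    using key unfolding ly(3) ly'(3)
    by (simp add: scaleR_sum_right sum.distrib[symmetric])
  ultimately show "u *\<^sub>R x + v *\<^sub>R z \<in> capC I P c" unfolding capC_def by blast
qed

theorem theorem2p2:
  fixes P :: "nat \<Rightarrow> 'a::euclidean_space set"
    and r t :: nat and a :: 'a and D :: real
  assumes r_ge: "r \<ge> 2"
    and fin: "\<And>i. i \<in> {1..r} \<Longrightarrow> finite (P i)"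
    and ne: "\<And>i. i \<in> {1..r} \<Longrightarrow> P i \<noteq> {}"
    and D_def: "D = (MAX i\<in>{1..r}. diameter (P i))"
    and t_range: "t \<in> {1..r-1}"
    and cover: "\<And>S. S \<subseteq> {1..r} \<Longrightarrow> card S = t \<Longrightarrow>
                   a \<in> convex hull (\<Union>i\<in>S. P i)"
  shows "\<exists>p::nat \<Rightarrow> 'a. (\<forall>i\<in>{1..r}. p i \<in> P i) \<and>
           infdist a (convex hull (p ` {1..r}))
             \<le> (4 * sqrt (ln 4 / 3)) * D / sqrt (real (r - t + 1))"
proof -
  define I where "I = {1..r}"
  define m where "m = r - t + 1"
  define c where "c = 1 / real m"
  have m1: "m \<ge> 1" "m \<le> r" using t_range r_ge unfolding m_def by auto
  have finI: "finite I" unfolding I_def by auto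
  have cardI: "card I = r" unfolding I_def by auto
  have Dge: "diameter (P i) \<le> D" if "i \<in> I" for i
    unfolding D_def using that I_def by (intro Max_ge) auto
  have D0: "D \<ge> 0"
  proof -
    have "1 \<in> I" using r_ge unfolding I_def by auto
    moreover have "diameter (P 1) \<ge> 0" using fin[of 1] r_ge
      by (intro diameter_ge_0 finite_imp_bounded) auto
    ultimately show ?thesis using Dge by force
  qed
  define X where "X = Sigma {S. S \<subseteq> I \<and> card S = m} (\<lambda>S. PiE S P)"
  define E where "E = (\<lambda>(S,p). c *\<^sub>R (\<Sum>i\<in>S. p i)) ` X"
  have finX: "finite X" unfolding X_def
  proof (intro finite_SigmaI)
    show "finite {S. S \<subseteq> I \<and> card S = m}" using finI by auto
    fix S assume "S \<in> {S. S \<subseteq> I \<and> card S = m}"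
    thus "finite (PiE S P)" using finI fin unfolding I_def
      by (intro finite_PiE) (auto intro: finite_subset)
  qed
  have aE: "a \<in> convex hull E"
  proof (rule ccontr)
    assume na: "a \<notin> convex hull E"
    have "closed (convex hull E)" unfolding E_def using finX
      by (intro compact_imp_closed finite_imp_compact_convex_hull) auto
    then obtain v b where vb: "inner v a < b" "\<forall>x\<in>convex hull E. inner v x > b"
      using separating_hyperplane_closed_point[OF convex_convex_hull _ na] by blast
    define G where "G = {i\<in>I. \<exists>q\<in>P i. inner v q \<le> inner v a}"
    have "card G \<ge> m"
    proof (rule ccontr)
      assume "\<not> card G \<ge> m"
      moreover have GI: "G \<subseteq> I" unfolding G_def by auto
      moreover have "finite G" using GI finI by (rule finite_subset)
      ultimately have "card (I - G) = r - card G" "card G < m"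
        using card_Diff_subset[of G I] cardI by auto
      hence "card (I - G) \<ge> t" unfolding m_def using t_range by auto
      then obtain S where S: "S \<subseteq> I - G" "card S = t" by (metis obtain_subset_with_card_n)
      have "(\<Union>i\<in>S. P i) \<subseteq> {x. inner v x > inner v a}"
      proof
        fix x assume "x \<in> (\<Union>i\<in>S. P i)"
        then obtain i where i: "i \<in> S" "x \<in> P i" by auto
        hence "i \<in> I" "i \<notin> G" using S by auto
        hence "\<not> inner v x \<le> inner v a" using i unfolding G_def by auto
        thus "x \<in> {x. inner v x > inner v a}" by auto
      qed
      hence "convex hull (\<Union>i\<in>S. P i) \<subseteq> {x. inner v x > inner v a}"
        by (intro hull_minimal convex_halfspace_gt)
      moreover have "a \<in> convex hull (\<Union>i\<in>S. P i)" using S cover unfolding I_def by auto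
      ultimately show False by auto
    qed
    then obtain S where S: "S \<subseteq> G" "card S = m" by (metis obtain_subset_with_card_n)
    have "\<forall>i\<in>S. \<exists>q\<in>P i. inner v q \<le> inner v a" using S unfolding G_def by auto
    then obtain q where q: "\<forall>i\<in>S. q i \<in> P i \<and> inner v (q i) \<le> inner v a" by metis
    define q' where "q' = restrict q S"
    have "(S, q') \<in> X" unfolding X_def q'_def using S q G_def by auto
    moreover have "c *\<^sub>R (\<Sum>i\<in>S. q i) = (\<lambda>(S,p). c *\<^sub>R (\<Sum>i\<in>S. p i)) (S, q')"
      unfolding q'_def by simp
    ultimately have e: "c *\<^sub>R (\<Sum>i\<in>S. q i) \<in> E" unfolding E_def
      by (rule rev_image_eqI)
    have "inner v (c *\<^sub>R (\<Sum>i\<in>S. q i)) = c * (\<Sum>i\<in>S. inner v (q i))"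
      by (simp add: inner_sum_right)
    also have "\<dots> \<le> c * (\<Sum>i\<in>S. inner v a)"
      using q unfolding c_def by (intro mult_left_mono sum_mono) auto
    also have "\<dots> = inner v a"
      using S m1 unfolding c_def by simp
    finally have ineq: "inner v (c *\<^sub>R (\<Sum>i\<in>S. q i)) \<le> inner v a" .
    have "c *\<^sub>R (\<Sum>i\<in>S. q i) \<in> convex hull E" using e by (rule hull_inc)
    hence "b < inner v (c *\<^sub>R (\<Sum>i\<in>S. q i))" using vb by blast
    thus False using ineq vb by linarith
  qed
  have EC: "E \<subseteq> capC I P c"
  proof
    fix x assume "x \<in> E"
    then obtain S p where Sp: "(S,p) \<in> X" "x = c *\<^sub>R (\<Sum>i\<in>S. p i)" unfolding E_def by auto
    have S: "S \<subseteq> I" "card S = m" "\<forall>i\<in>S. p i \<in> P i" using Sp unfolding X_def by auto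
    define l where "l i = (if i \<in> S then c else 0)" for i
    define y where "y i = (if i \<in> S then p i else (SOME z. z \<in> P i))" for i
    have "\<forall>i\<in>I. 0 \<le> l i \<and> l i \<le> c \<and> y i \<in> convex hull P i"
    proof
      fix i assume i: "i \<in> I"
      have "y i \<in> P i" using S i ne[of i] unfolding y_def I_def by (auto intro: someI_ex)
      thus "0 \<le> l i \<and> l i \<le> c \<and> y i \<in> convex hull P i"
        unfolding l_def c_def by (auto intro: hull_inc)
    qed
    moreover have "sum l I = 1"
    proof -
      have "sum l I = (\<Sum>i\<in>S. c)" unfolding l_def using S finI
        by (simp add: sum.If_cases Int_absorb1 Int_commute)
      thus ?thesis using S m1 unfolding c_def by simp
    qed
    moreover have "x = (\<Sum>i\<in>I. l i *\<^sub>R y i)"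
    proof -
      have "(\<Sum>i\<in>I. l i *\<^sub>R y i) = (\<Sum>i\<in>I. if i \<in> S then c *\<^sub>R p i else 0)"
        by (intro sum.cong) (auto simp: l_def y_def)
      also have "\<dots> = (\<Sum>i\<in>I \<inter> S. c *\<^sub>R p i)" using finI by (simp add: sum.inter_restrict)
      also have "I \<inter> S = S" using S by auto
      finally have "(\<Sum>i\<in>I. l i *\<^sub>R y i) = (\<Sum>i\<in>S. c *\<^sub>R p i)" .
      thus ?thesis using Sp by (simp add: scaleR_sum_right)
    qed
    ultimately show "x \<in> capC I P c" unfolding capC_def by blast
  qed
  have "convex hull E \<subseteq> capC I P c"
    using EC convex_capC[OF finI, of P c] ne unfolding I_def by (intro hull_minimal) auto
  with aE obtain l y where ly: "\<forall>i\<in>I. 0 \<le> l i \<and> l i \<le> c \<and> y i \<in> convex hull P i"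
    "sum l I = 1" "a = (\<Sum>i\<in>I. l i *\<^sub>R y i)" unfolding capC_def by blast
  obtain p where p: "\<forall>i\<in>I. p i \<in> P i"
    and pb: "(norm (\<Sum>i\<in>I. l i *\<^sub>R (p i - y i)))^2 \<le> D^2 * (\<Sum>i\<in>I. (l i)^2)"
    using greedy[OF finI, of P y D l] ly(1) fin Dge unfolding I_def by auto
  have "(\<Sum>i\<in>I. (l i)^2) \<le> (\<Sum>i\<in>I. c * l i)"
    using ly(1) by (intro sum_mono) (auto simp: power2_eq_square intro: mult_right_mono)
  also have "\<dots> = c" using ly(2) by (simp add: sum_distrib_left[symmetric])
  finally have "(norm (\<Sum>i\<in>I. l i *\<^sub>R (p i - y i)))^2 \<le> D^2 * c"
    using pb by (meson D0 mult_left_mono order_trans zero_le_power2)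
  hence "norm (\<Sum>i\<in>I. l i *\<^sub>R (p i - y i)) \<le> sqrt (D^2 * c)"
    by (simp add: real_le_rsqrt)
  also have "\<dots> = D / sqrt (real m)" using D0 m1 unfolding c_def
    by (simp add: real_sqrt_mult real_sqrt_divide)
  finally have nb: "norm (\<Sum>i\<in>I. l i *\<^sub>R (p i - y i)) \<le> D / sqrt (real m)" .
  define x where "x = (\<Sum>i\<in>I. l i *\<^sub>R p i)"
  have xin: "x \<in> convex hull (p ` I)" unfolding x_def
    using ly(1,2) finI by (intro convex_sum) (auto intro: hull_inc)
  have "dist a x = norm (\<Sum>i\<in>I. l i *\<^sub>R (p i - y i))"
    unfolding x_def ly(3) dist_norm
    by (simp add: scaleR_diff_right sum_subtractf norm_minus_commute)
  hence "infdist a (convex hull (p ` I)) \<le> D / sqrt (real m)"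
    using infdist_le[OF xin, of a] nb by linarith
  moreover have "D / sqrt (real m) \<le> (4 * sqrt (ln 4 / 3)) * D / sqrt (real m)"
  proof -
    have "ln (4::real) \<ge> 1"
      using ln_ge_iff[of 4 1] exp_le by (simp add: ln_ge_iff)
    hence "sqrt (ln 4 / 3) \<ge> sqrt (1/16)" by (intro real_sqrt_le_mono) auto
    hence "4 * sqrt (ln 4 / 3) \<ge> 1" by (simp add: real_sqrt_divide)
    hence "1 * D \<le> (4 * sqrt (ln 4 / 3)) * D" using D0 by (intro mult_right_mono)
    thus ?thesis by (intro divide_right_mono) auto
  qed
  ultimately show ?thesis using p unfolding I_def m_def by (intro exI[of _ p]) auto
qed

end
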